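(* Let $m\in\mathbb{N}$, let $(y_k)_{k=1}^m$ be a $1$-unconditional basic sequence and let $\varepsilon>0$. Then there exist $n\in\mathbb{N}$ and a block basis $(x_k)_{k=1}^m$ of the basis $(e_{i,j})_{i,j=1}^n$ of $B(\ell_\infty^n)$ (ordered lexicographically) such that $(x_k)_{k=1}^m$ is $(1+\varepsilon)$-equivalent to $(y_k)_{k=1}^m$, i.e. $(1+\varepsilon)^{-1}\|\sum_k b_ky_k\|\le\|\sum_k b_kx_k\|\le(1+\varepsilon)\|\sum_k b_ky_k\|$ for all scalars $(b_k)$.
   Context: $B(\ell_\infty^n)$ is the $n^2$-dimensional Banach space of linear operators on $\ell_\infty^n$ with the operator norm. With $(f_k)_{k=1}^n$ the unit vector basis of $\ell_\infty^n$, $e_{i,j}$ is the operator with $e_{i,j}(f_k)=f_j$ if $k=i$ and $e_{i,j}(f_k)=0$ otherwise. Then $\|\sum_{i,j=1}^n a_{i,j}e_{i,j}\|=\max_{j\le n}\sum_{i=1}^n|a_{i,j}|$, so $(e_{i,j})$ is a $1$-unconditional basis, ordered lexicographically as $e_{11},e_{12},\dots,e_{1n},e_{21},\dots,e_{nn}$. *)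

theory Defs
  imports "HOL-Analysis.Analysis"
begin

text \<open>An operator on l_infinity^n is represented by its coefficient array a i j
  (coefficient of e_{i,j}), indices i, j < n (0-based); entries outside are required
  to vanish where relevant.\<close>

definition opnorm :: "nat \<Rightarrow> (nat \<Rightarrow> nat \<Rightarrow> real) \<Rightarrow> real" where
  "opnorm n a = Max (insert 0 ((\<lambda>j. \<Sum>i<n. \<bar>a i j\<bar>) ` {..<n}))"

definition mat_supp :: "nat \<Rightarrow> (nat \<Rightarrow> nat \<Rightarrow> real) \<Rightarrow> (nat \<times> nat) set" where
  "mat_supp n a = {(i, j). i < n \<and> j < n \<and> a i j \<noteq> 0}"

definition lexpos :: "nat \<Rightarrow> nat \<times> nat \<Rightarrow> nat" where
  "lexpos n p = fst p * n + snd p"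

definition is_block_basis :: "nat \<Rightarrow> nat \<Rightarrow> (nat \<Rightarrow> nat \<Rightarrow> nat \<Rightarrow> real) \<Rightarrow> bool" where
  "is_block_basis n m x \<longleftrightarrow>
     (\<forall>k<m. \<forall>i j. x k i j \<noteq> 0 \<longrightarrow> i < n \<and> j < n) \<and>
     (\<forall>k<m. mat_supp n (x k) \<noteq> {}) \<and>
     (\<forall>k l. k < l \<and> l < m \<longrightarrow>
        (\<forall>p\<in>mat_supp n (x k). \<forall>q\<in>mat_supp n (x l). lexpos n p < lexpos n q))"

definition one_uncond_basic :: "nat \<Rightarrow> (nat \<Rightarrow> 'a::real_normed_vector) \<Rightarrow> bool" where
  "one_uncond_basic m y \<longleftrightarrow>
     (\<forall>k<m. y k \<noteq> 0) \<and>
     (\<exists>K. \<forall>b::nat \<Rightarrow> real. \<forall>j\<le>m.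
         norm (\<Sum>k<j. b k *\<^sub>R y k) \<le> K * norm (\<Sum>k<m. b k *\<^sub>R y k)) \<and>
     (\<forall>(b::nat \<Rightarrow> real) (s::nat \<Rightarrow> real). (\<forall>k<m. s k = 1 \<or> s k = -1) \<longrightarrow>
         norm (\<Sum>k<m. (s k * b k) *\<^sub>R y k) = norm (\<Sum>k<m. b k *\<^sub>R y k))"

end

theory Submission
  imports Defs
begin

definition trc :: "nat \<Rightarrow> (nat \<Rightarrow> real) \<Rightarrow> nat \<Rightarrow> real" where
  "trc m d = (\<lambda>k. if k < m then d k else 0)"

lemma dom_ext:
  fixes q :: "(nat \<Rightarrow> real) \<Rightarrow> real"
  assumes sa: "\<And>x y. q (\<lambda>k. x k + y k) \<le> q x + q y"
      and hom: "\<And>s x. s > 0 \<Longrightarrow> s * q x \<le> q (\<lambda>k. s * x k)"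
  shows "\<exists>a. \<forall>d. (\<Sum>k<m. a k * d k) \<le> q (trc m d)"
proof (induction m)
  case 0
  have "q (\<lambda>k. 0 + 0) \<le> q (\<lambda>k. 0) + q (\<lambda>k. 0)" using sa[of "\<lambda>k. 0" "\<lambda>k. 0"] .
  then have "0 \<le> q (\<lambda>k. 0)" by simp
  moreover have "trc 0 d = (\<lambda>k. 0)" for d by (simp add: trc_def)
  ultimately show ?case by simp
next
  case (Suc m)
  then obtain a where a: "\<And>d. (\<Sum>k<m. a k * d k) \<le> q (trc m d)" by blast
  define \<phi> where "\<phi> d = (\<Sum>k<m. a k * d k)" for d
  define e where "e = (\<lambda>k::nat. if k = m then (1::real) else 0)"
  have key: "\<phi> u - q (\<lambda>k. trc m u k - e k) \<le> q (\<lambda>k. trc m v k + e k) - \<phi> v" for u v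
  proof -
    have "\<phi> u + \<phi> v = \<phi> (\<lambda>k. u k + v k)"
      by (simp add: \<phi>_def sum.distrib distrib_left)
    also have "\<dots> \<le> q (trc m (\<lambda>k. u k + v k))" using a \<phi>_def by simp
    also have "trc m (\<lambda>k. u k + v k) = (\<lambda>k. (trc m u k - e k) + (trc m v k + e k))"
      by (auto simp: trc_def)
    also have "q \<dots> \<le> q (\<lambda>k. trc m u k - e k) + q (\<lambda>k. trc m v k + e k)" by (rule sa)
    finally show ?thesis by simp
  qed
  define S where "S = (\<lambda>u. \<phi> u - q (\<lambda>k. trc m u k - e k)) ` UNIV"
  define \<alpha> where "\<alpha> = Sup S"
  have bdd: "bdd_above S" unfolding S_def bdd_above_def using key[of _ "\<lambda>k. 0"] by blast
  have up: "\<phi> u - q (\<lambda>k. trc m u k - e k) \<le> \<alpha>" for u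
    unfolding \<alpha>_def by (rule cSup_upper[OF _ bdd]) (auto simp: S_def)
  have lo: "\<alpha> \<le> q (\<lambda>k. trc m v k + e k) - \<phi> v" for v
    unfolding \<alpha>_def by (rule cSup_least) (auto simp: S_def key)
  define a' where "a' = a(m := \<alpha>)"
  show ?case
  proof (intro exI allI)
    fix d :: "nat \<Rightarrow> real"
    have sumeq: "(\<Sum>k<Suc m. a' k * d k) = \<phi> d + \<alpha> * d m"
      by (simp add: a'_def \<phi>_def)
    consider "d m = 0" | "d m > 0" | "d m < 0" by linarith
    then show "(\<Sum>k<Suc m. a' k * d k) \<le> q (trc (Suc m) d)"
    proof cases
      case 1
      then have "trc (Suc m) d = trc m d" by (auto simp: trc_def less_Suc_eq)
      then show ?thesis using sumeq 1 a[of d] by (simp add: \<phi>_def)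
    next
      case 2
      define s where "s = d m"
      define z where "z = (\<lambda>k. d k / s)"
      have "trc (Suc m) d = (\<lambda>k. s * (trc m z k + e k))"
        using 2 by (auto simp: trc_def z_def e_def s_def less_Suc_eq)
      moreover have "s * (\<alpha> + \<phi> z) \<le> s * q (\<lambda>k. trc m z k + e k)"
        using lo[of z] 2 s_def by (intro mult_left_mono) auto
      moreover have "s * \<phi> z = \<phi> d"
        using 2 by (simp add: \<phi>_def z_def s_def sum_distrib_left)
      ultimately show ?thesis using hom[of s "\<lambda>k. trc m z k + e k"] 2 sumeq s_def
        by (simp add: distrib_left mult.commute)
    next
      case 3
      define t where "t = - d m"
      define z where "z = (\<lambda>k. d k / t)"
      have "trc (Suc m) d = (\<lambda>k. t * (trc m z k - e k))"
        using 3 by (auto simp: trc_def z_def e_def t_def less_Suc_eq)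
      moreover have "t * (\<phi> z - \<alpha>) \<le> t * q (\<lambda>k. trc m z k - e k)"
        using up[of z] 3 t_def by (intro mult_left_mono) auto
      moreover have "t * \<phi> z = \<phi> d"
        using 3 by (simp add: \<phi>_def z_def t_def sum_distrib_left)
      ultimately show ?thesis using hom[of t "\<lambda>k. trc m z k - e k"] 3 sumeq t_def
        by (simp add: right_diff_distrib mult.commute)
    qed
  qed
qed

lemma norming:
  fixes q :: "(nat \<Rightarrow> real) \<Rightarrow> real"
  assumes sa: "\<And>x y. q (\<lambda>k. x k + y k) \<le> q x + q y"
      and hom: "\<And>s x. s \<ge> 0 \<Longrightarrow> q (\<lambda>k. s * x k) = s * q x"
      and dep: "\<And>d. q (trc m d) = q d"
  shows "\<exists>a. (\<forall>d. (\<Sum>k<m. a k * d k) \<le> q d) \<and> q c \<le> (\<Sum>k<m. a k * c k)"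
proof -
  define g where "g d t = q (\<lambda>k. d k + t * c k) - t * q c" for d t
  define q' where "q' d = Inf (g d ` {0..})" for d
  have q0: "q (\<lambda>k. 0) = 0" using hom[of 0 "\<lambda>k. 0"] by simp
  have glow: "- q (\<lambda>k. - d k) \<le> g d t" if "t \<ge> 0" for d t
  proof -
    have "q (\<lambda>k. (d k + t * c k) + (- d k)) \<le> q (\<lambda>k. d k + t * c k) + q (\<lambda>k. - d k)"
      by (rule sa)
    moreover have "q (\<lambda>k. (d k + t * c k) + (- d k)) = t * q c"
      using hom[of t c] that by simp
    ultimately show ?thesis by (simp add: g_def)
  qed
  have bdd: "bdd_below (g d ` {0..})" for d
    unfolding bdd_below_def using glow by blast
  have q'_le: "q' d \<le> g d t" if "t \<ge> 0" for d t
    unfolding q'_def using that by (intro cInf_lower[OF _ bdd]) auto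
  have q'_ge: "x \<le> q' d" if "\<And>t. t \<ge> 0 \<Longrightarrow> x \<le> g d t" for x d
    unfolding q'_def using that by (intro cInf_greatest) auto
  have sa': "q' (\<lambda>k. x k + y k) \<le> q' x + q' y" for x y
  proof -
    have "q' (\<lambda>k. x k + y k) \<le> g x t1 + g y t2" if "t1 \<ge> 0" "t2 \<ge> 0" for t1 t2
    proof -
      have "q' (\<lambda>k. x k + y k) \<le> g (\<lambda>k. x k + y k) (t1 + t2)"
        using that by (intro q'_le) auto
      also have "\<dots> \<le> g x t1 + g y t2"
        using sa[of "\<lambda>k. x k + t1 * c k" "\<lambda>k. y k + t2 * c k"]
        by (simp add: g_def algebra_simps)
      finally show ?thesis .
    qed
    then have "q' (\<lambda>k. x k + y k) - g y t2 \<le> q' x" if "t2 \<ge> 0" for t2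
      using that by (intro q'_ge) (simp add: algebra_simps)
    then have "q' (\<lambda>k. x k + y k) - q' x \<le> q' y"
      by (intro q'_ge) (simp add: algebra_simps)
    then show ?thesis by simp
  qed
  have hom': "s * q' x \<le> q' (\<lambda>k. s * x k)" if "s > 0" for s x
  proof -
    have "q' x \<le> g (\<lambda>k. s * x k) t / s" if "t \<ge> 0" for t
    proof -
      have "q' x \<le> g x (t / s)" using that \<open>s > 0\<close> by (intro q'_le) auto
      also have "g x (t / s) = g (\<lambda>k. s * x k) t / s"
      proof -
        have "(\<lambda>k. s * x k + t * c k) = (\<lambda>k. s * (x k + t / s * c k))"
          using \<open>s > 0\<close> by (auto simp: field_simps)
        then have "q (\<lambda>k. s * x k + t * c k) = s * q (\<lambda>k. x k + t / s * c k)"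
          using hom[of s] \<open>s > 0\<close> by simp
        then show ?thesis using \<open>s > 0\<close> by (simp add: g_def field_simps)
      qed
      finally show ?thesis .
    qed
    then have "s * q' x \<le> g (\<lambda>k. s * x k) t" if "t \<ge> 0" for t
      using that \<open>s > 0\<close> by (simp add: field_simps)
    then show ?thesis by (intro q'_ge)
  qed
  have dep': "q' (trc m d) = q' d" for d
  proof -
    have "g (trc m d) t = g d t" for t
    proof -
      have "q (\<lambda>k. trc m d k + t * c k) = q (trc m (\<lambda>k. trc m d k + t * c k))" by (simp add: dep)
      also have "trc m (\<lambda>k. trc m d k + t * c k) = trc m (\<lambda>k. d k + t * c k)"
        by (auto simp: trc_def)
      also have "q \<dots> = q (\<lambda>k. d k + t * c k)" by (simp add: dep)
      finally show ?thesis by (simp add: g_def)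
    qed
    then show ?thesis by (simp add: q'_def)
  qed
  obtain a where a: "\<And>d. (\<Sum>k<m. a k * d k) \<le> q' (trc m d)"
    using dom_ext[of q' m, OF sa' hom'] by blast
  show ?thesis
  proof (intro exI conjI allI)
    fix d
    have "q' d \<le> g d 0" by (rule q'_le) simp
    then show "(\<Sum>k<m. a k * d k) \<le> q d" using a[of d] dep' by (simp add: g_def)
  next
    have "q' (\<lambda>k. - c k) \<le> g (\<lambda>k. - c k) 1" by (rule q'_le) simp
    also have "\<dots> = - q c" using q0 by (simp add: g_def)
    finally have "(\<Sum>k<m. a k * (- c k)) \<le> - q c" using a[of "\<lambda>k. - c k"] dep' by simp
    then show "q c \<le> (\<Sum>k<m. a k * c k)" by (simp add: sum_negf)
  qed
qed

theorem proposition2p2: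
  fixes m :: nat and y :: "nat \<Rightarrow> 'a::banach" and \<epsilon> :: real
  assumes "one_uncond_basic m y" and "\<epsilon> > 0"
  shows "\<exists>n::nat. \<exists>x :: nat \<Rightarrow> nat \<Rightarrow> nat \<Rightarrow> real. is_block_basis n m x \<and>
    (\<forall>b::nat \<Rightarrow> real.
       inverse (1 + \<epsilon>) * norm (\<Sum>k<m. b k *\<^sub>R y k)
         \<le> opnorm n (\<lambda>i j. \<Sum>k<m. b k * x k i j) \<and>
       opnorm n (\<lambda>i j. \<Sum>k<m. b k * x k i j)
         \<le> (1 + \<epsilon>) * norm (\<Sum>k<m. b k *\<^sub>R y k))"
proof -
  have ynz: "\<And>k. k < m \<Longrightarrow> y k \<noteq> 0" using assms(1) unfolding one_uncond_basic_def by blast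
  have unc: "\<And>b s. (\<forall>k<m. s k = 1 \<or> s k = -1) \<Longrightarrow>
      norm (\<Sum>k<m. (s k * b k) *\<^sub>R y k) = norm (\<Sum>k<m. b k *\<^sub>R y k)"
    using assms(1) unfolding one_uncond_basic_def by blast
  define N where "N b = norm (\<Sum>k<m. b k *\<^sub>R y k)" for b
  have N_sa: "N (\<lambda>k. x k + z k) \<le> N x + N z" for x z
    by (simp add: N_def scaleR_add_left sum.distrib norm_triangle_ineq)
  have N_hom: "N (\<lambda>k. s * x k) = s * N x" if "s \<ge> 0" for s x
  proof -
    have "(\<Sum>k<m. (s * x k) *\<^sub>R y k) = s *\<^sub>R (\<Sum>k<m. x k *\<^sub>R y k)"
      by (simp add: scaleR_sum_right)
    then show ?thesis using that by (simp add: N_def)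
  qed
  have N_dep: "N (trc m d) = N d" for d
    by (simp add: N_def trc_def)
  have N_ge: "N b \<ge> 0" for b by (simp add: N_def)
  have N_neg: "N (\<lambda>k. - b k) = N b" for b
    by (simp add: N_def sum_negf)
  have N_abs: "(\<Sum>i<m. \<bar>b i * a i\<bar>) \<le> N b" if a: "\<And>d. (\<Sum>k<m. a k * d k) \<le> N d" for a b
  proof -
    define s where "s i = (if b i * a i \<ge> 0 then 1 else (-1::real))" for i
    have "(\<Sum>i<m. \<bar>b i * a i\<bar>) = (\<Sum>i<m. a i * (s i * b i))"
      by (intro sum.cong) (auto simp: s_def abs_if)
    also have "\<dots> \<le> N (\<lambda>i. s i * b i)" by (rule a)
    also have "\<dots> = N b" unfolding N_def by (rule unc) (auto simp: s_def)
    finally show ?thesis .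
  qed
  have N_coord: "\<bar>b k\<bar> * norm (y k) \<le> N b" if "k < m" for b k
  proof -
    define s where "s i = (if i = k then 1 else (-1::real))" for i
    have "(\<Sum>i<m. b i *\<^sub>R y i) + (\<Sum>i<m. (s i * b i) *\<^sub>R y i) = (\<Sum>i<m. (if i = k then 2 * b k else 0) *\<^sub>R y i)"
      by (simp add: sum.distrib[symmetric] scaleR_add_left[symmetric], intro sum.cong) (auto simp: s_def)
    also have "\<dots> = (2 * b k) *\<^sub>R y k" using that
      by (simp add: if_distrib[of "\<lambda>c. c *\<^sub>R y _"] cong: if_cong)
    finally have "norm ((2 * b k) *\<^sub>R y k) \<le> N b + N (\<lambda>i. s i * b i)"
      unfolding N_def by (metis norm_triangle_ineq)
    also have "N (\<lambda>i. s i * b i) = N b" unfolding N_def by (rule unc) (auto simp: s_def)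
    finally show ?thesis by simp
  qed
  define M where "M = (\<Sum>k<m. norm (y k))"
  have M_ge: "M \<ge> 0" by (simp add: M_def sum_nonneg)
  have N_diff: "N (\<lambda>k. b k - c k) \<le> (\<Sum>k<m. \<bar>b k - c k\<bar> * norm (y k))" for b c
    unfolding N_def by (rule order_trans[OF norm_sum]) simp
  define A where "A c = (SOME a. (\<forall>d. (\<Sum>k<m. a k * d k) \<le> N d) \<and> N c \<le> (\<Sum>k<m. a k * c k))" for c
  have A: "(\<forall>d. (\<Sum>k<m. A c k * d k) \<le> N d) \<and> N c \<le> (\<Sum>k<m. A c k * c k)" for c
  proof -
    have "\<exists>a. (\<forall>d. (\<Sum>k<m. a k * d k) \<le> N d) \<and> N c \<le> (\<Sum>k<m. a k * c k)"
      by (rule norming[OF N_sa N_hom N_dep])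
    then show ?thesis unfolding A_def by (rule someI_ex)
  qed
  define \<delta> where "\<delta> = \<epsilon> / (2 * (1 + \<epsilon>) * (M + 1))"
  have \<delta>_pos: "\<delta> > 0" using assms(2) M_ge by (simp add: \<delta>_def)
  have \<delta>M: "1 / (1 + \<epsilon>) \<le> 1 - 2 * \<delta> * M"
  proof -
    have "2 * \<delta> * M = \<epsilon> / (1 + \<epsilon>) * (M / (M + 1))"
      using assms(2) M_ge by (simp add: \<delta>_def divide_simps)
    also have "\<dots> \<le> \<epsilon> / (1 + \<epsilon>) * 1"
      using assms(2) M_ge by (intro mult_left_mono) auto
    finally show ?thesis using assms(2) by (simp add: field_simps)
  qed
  define C where "C = (\<Sum>k<m. 1 / norm (y k))"
  define L :: int where "L = \<lceil>C / \<delta>\<rceil> + 1"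
  define G where "G = PiE {..<m} (\<lambda>_. (\<lambda>i::int. \<delta> * of_int i) ` {-L..L})"
  have "finite G" unfolding G_def by (intro finite_PiE) auto
  then obtain cs where cs: "set cs = G" using finite_list by blast
  define J where "J = length cs"
  define A' where "A' j = A (cs ! j)" for j
  have lowbd: "\<exists>j<J. N b / (1 + \<epsilon>) \<le> (\<Sum>i<m. A' j i * b i)" if Nb: "N b > 0" for b
  proof -
    define b' where "b' k = b k / N b" for k
    have "(\<lambda>k. (1 / N b) * b k) = b'" by (auto simp: b'_def)
    then have Nb': "N b' = 1" using N_hom[of "1 / N b" b] Nb by simp
    define c where "c k = (if k < m then \<delta> * of_int \<lfloor>b' k / \<delta>\<rfloor> else undefined)" for k
    have bnd: "\<bar>b' k\<bar> \<le> C" if "k < m" for k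
    proof -
      have "\<bar>b' k\<bar> * norm (y k) \<le> 1" using N_coord[OF that, of b'] Nb' by simp
      then have "\<bar>b' k\<bar> \<le> 1 / norm (y k)" using ynz[OF that] by (simp add: field_simps)
      also have "\<dots> \<le> C" unfolding C_def using that by (intro member_le_sum) auto
      finally show ?thesis .
    qed
    have cG: "c \<in> G"
    proof -
      have "\<lfloor>b' k / \<delta>\<rfloor> \<in> {-L..L}" if "k < m" for k
      proof -
        have "\<bar>b' k / \<delta>\<bar> \<le> C / \<delta>" using bnd[OF that] \<delta>_pos by (simp add: divide_right_mono)
        then have "b' k / \<delta> \<le> C / \<delta>" "- (C / \<delta>) \<le> b' k / \<delta>" by linarith+
        moreover have "C / \<delta> \<le> of_int \<lceil>C / \<delta>\<rceil>" by (rule le_of_int_ceiling)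
        moreover have "of_int \<lfloor>b' k / \<delta>\<rfloor> \<le> b' k / \<delta>" "b' k / \<delta> < of_int \<lfloor>b' k / \<delta>\<rfloor> + 1"
          by (rule of_int_floor_le, rule real_of_int_floor_add_one_gt)
        ultimately have "real_of_int \<lfloor>b' k / \<delta>\<rfloor> \<le> real_of_int L" "- real_of_int L \<le> real_of_int \<lfloor>b' k / \<delta>\<rfloor>"
          unfolding L_def by linarith+
        then show ?thesis by simp
      qed
      then show ?thesis unfolding G_def c_def by (auto simp: PiE_def extensional_def)
    qed
    have cl: "\<bar>b' k - c k\<bar> \<le> \<delta>" if "k < m" for k
    proof -
      have f1: "of_int \<lfloor>b' k / \<delta>\<rfloor> \<le> b' k / \<delta>" and f2: "b' k / \<delta> < of_int \<lfloor>b' k / \<delta>\<rfloor> + 1"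
        by (rule of_int_floor_le, rule real_of_int_floor_add_one_gt)
      have "\<delta> * of_int \<lfloor>b' k / \<delta>\<rfloor> \<le> \<delta> * (b' k / \<delta>)"
        using mult_left_mono[OF f1, of \<delta>] \<delta>_pos by simp
      moreover have "\<delta> * (b' k / \<delta>) < \<delta> * (of_int \<lfloor>b' k / \<delta>\<rfloor> + 1)"
        using mult_strict_left_mono[OF f2 \<delta>_pos] .
      ultimately have "\<delta> * of_int \<lfloor>b' k / \<delta>\<rfloor> \<le> b' k" "b' k < \<delta> * of_int \<lfloor>b' k / \<delta>\<rfloor> + \<delta>"
        using \<delta>_pos by (simp_all add: algebra_simps)
      then show ?thesis using that by (simp add: c_def)
    qed
    have dM: "(\<Sum>k<m. \<bar>b' k - c k\<bar> * norm (y k)) \<le> \<delta> * M"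
      unfolding M_def sum_distrib_left by (intro sum_mono mult_right_mono) (auto simp: cl)
    have d1: "N (\<lambda>k. b' k - c k) \<le> \<delta> * M" using N_diff[of b' c] dM by simp
    have d2: "N (\<lambda>k. c k - b' k) \<le> \<delta> * M" using N_diff[of c b'] dM by (simp add: abs_minus_commute)
    have tri: "N b' \<le> N c + N (\<lambda>k. b' k - c k)" using N_sa[of c "\<lambda>k. b' k - c k"] by simp
    define \<phi> where "\<phi> d = (\<Sum>k<m. A c k * d k)" for d
    have "\<phi> b' = \<phi> c - \<phi> (\<lambda>k. c k - b' k)"
      by (simp add: \<phi>_def sum_subtractf[symmetric] algebra_simps)
    moreover have "N c \<le> \<phi> c" "\<phi> (\<lambda>k. c k - b' k) \<le> N (\<lambda>k. c k - b' k)" using A[of c] by (auto simp: \<phi>_def)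
    ultimately have "1 - 2 * \<delta> * M \<le> \<phi> b'" using Nb' d1 d2 tri by linarith
    with \<delta>M have ph: "1 / (1 + \<epsilon>) \<le> \<phi> b'" by linarith
    have "\<phi> b = N b * \<phi> b'" using Nb by (simp add: \<phi>_def b'_def sum_distrib_left field_simps)
    then have "N b / (1 + \<epsilon>) \<le> \<phi> b" using mult_left_mono[OF ph, of "N b"] Nb by simp
    moreover obtain j where "j < J" "cs ! j = c" using cG cs by (auto simp: J_def in_set_conv_nth)
    ultimately show ?thesis by (auto simp: A'_def \<phi>_def)
  qed
  define n where "n = max m J"
  define x where "x k i j = (if k < m \<and> i = k \<and> j < J then A' j k else (0::real))" for k i j
  define col where "col b j = (if j < J then (\<Sum>i<m. \<bar>b i * A' j i\<bar>) else 0)" for b j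
  have sumx: "(\<Sum>k<m. b k * x k i j) = (if i < m \<and> j < J then b i * A' j i else 0)" for b i j
  proof -
    have "(\<Sum>k<m. b k * x k i j) = (\<Sum>k<m. if k = i then (if j < J then b k * A' j k else 0) else 0)"
      by (intro sum.cong) (auto simp: x_def)
    also have "\<dots> = (if i < m \<and> j < J then b i * A' j i else 0)"
      by (simp add: sum.delta')
    finally show ?thesis .
  qed
  have colx: "(\<Sum>i<n. \<bar>\<Sum>k<m. b k * x k i j\<bar>) = col b j" for b j
  proof -
    have "(\<Sum>i<n. \<bar>\<Sum>k<m. b k * x k i j\<bar>) = (\<Sum>i<m. \<bar>\<Sum>k<m. b k * x k i j\<bar>)"
      by (rule sum.mono_neutral_right) (auto simp: n_def sumx)
    also have "\<dots> = col b j" by (simp add: sumx col_def)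
    finally show ?thesis .
  qed
  have opn: "opnorm n (\<lambda>i j. \<Sum>k<m. b k * x k i j) = Max (insert 0 (col b ` {..<n}))" for b
    by (simp add: opnorm_def colx)
  have colle: "col b j \<le> N b" for b j
  proof (cases "j < J")
    case True
    then show ?thesis using N_abs[of "A' j" b] A[of "cs ! j"] by (simp add: col_def A'_def)
  qed (simp add: col_def N_ge)
  have lowbd2: "\<exists>j<J. N b / (1 + \<epsilon>) \<le> col b j" if pos: "N b > 0" for b
  proof -
    obtain j where j: "j < J" "N b / (1 + \<epsilon>) \<le> (\<Sum>i<m. A' j i * b i)" using lowbd[OF pos] by blast
    have "(\<Sum>i<m. A' j i * b i) \<le> (\<Sum>i<m. \<bar>b i * A' j i\<bar>)"
      by (intro sum_mono) (simp add: mult.commute)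
    then have "N b / (1 + \<epsilon>) \<le> col b j" using j by (simp add: col_def)
    then show ?thesis using j(1) by blast
  qed
  have blk1: "\<forall>k<m. \<forall>i j. x k i j \<noteq> 0 \<longrightarrow> i < n \<and> j < n"
    by (auto simp: x_def n_def)
  have blk2: "mat_supp n (x k) \<noteq> {}" if k: "k < m" for k
  proof -
    define b where "b i = (if i = k then 1 else (0::real))" for i
    have "(\<Sum>i<m. b i *\<^sub>R y i) = (\<Sum>i<m. if i = k then y k else 0)"
      by (intro sum.cong) (auto simp: b_def)
    also have "\<dots> = y k" using k by (simp add: sum.delta')
    finally have "N b > 0" using ynz[OF k] by (simp add: N_def)
    then obtain j where j: "j < J" "N b / (1 + \<epsilon>) \<le> (\<Sum>i<m. A' j i * b i)"
      using lowbd by blast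
    have "(\<Sum>i<m. A' j i * b i) = (\<Sum>i<m. if i = k then A' j k else 0)"
      by (intro sum.cong) (auto simp: b_def)
    also have "\<dots> = A' j k" using k by (simp add: sum.delta')
    finally have eq: "(\<Sum>i<m. A' j i * b i) = A' j k" .
    have "N b / (1 + \<epsilon>) > 0" using \<open>N b > 0\<close> assms(2) by simp
    then have "A' j k \<noteq> 0" using j eq by linarith
    then have "(k, j) \<in> mat_supp n (x k)" using k j by (auto simp: mat_supp_def x_def n_def)
    then show ?thesis by blast
  qed
  have blk3: "lexpos n p < lexpos n q"
    if kl: "k < l" "l < m" and p: "p \<in> mat_supp n (x k)" and q: "q \<in> mat_supp n (x l)" for k l p q
  proof -
    obtain j where pj: "p = (k, j)" "j < n" using p by (auto simp: mat_supp_def x_def split: if_splits)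
    obtain j' where qj: "q = (l, j')" using q by (auto simp: mat_supp_def x_def split: if_splits)
    have "Suc k * n \<le> l * n" using kl by (intro mult_le_mono1) simp
    then show ?thesis using pj qj by (simp add: lexpos_def)
  qed
  have blk: "is_block_basis n m x"
    unfolding is_block_basis_def using blk1 blk2 blk3 by blast
  show ?thesis
  proof (intro exI conjI allI)
    show "is_block_basis n m x" by (rule blk)
  next
    fix b
    have fin: "finite (insert 0 (col b ` {..<n}))" by simp
    show "opnorm n (\<lambda>i j. \<Sum>k<m. b k * x k i j) \<le> (1 + \<epsilon>) * norm (\<Sum>k<m. b k *\<^sub>R y k)"
    proof -
      have "Max (insert 0 (col b ` {..<n})) \<le> N b"
        using N_ge colle by (intro Max.boundedI) auto
      also have "N b \<le> (1 + \<epsilon>) * N b" using N_ge[of b] assms(2) mult_nonneg_nonneg[of \<epsilon> "N b"] by (simp add: distrib_right)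
      finally show ?thesis by (simp add: opn N_def)
    qed
    show "inverse (1 + \<epsilon>) * norm (\<Sum>k<m. b k *\<^sub>R y k) \<le> opnorm n (\<lambda>i j. \<Sum>k<m. b k * x k i j)"
    proof (cases "N b > 0")
      case True
      then obtain j where j: "j < J" "N b / (1 + \<epsilon>) \<le> col b j" using lowbd2 by blast
      have "col b j \<le> Max (insert 0 (col b ` {..<n}))"
        using j by (intro Max_ge[OF fin]) (auto simp: n_def)
      then show ?thesis using j by (simp add: opn N_def[symmetric] field_simps)
    next
      case False
      then have "N b = 0" using N_ge[of b] by simp
      moreover have "0 \<le> Max (insert 0 (col b ` {..<n}))" by (intro Max_ge[OF fin]) simp
      ultimately show ?thesis by (simp add: opn N_def[symmetric])
    qed
  qed
qed

end
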